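(* Let $n\ge 1$, let $c\in\mathbb{R}^n$ with $c_1\ge c_2\ge\cdots\ge c_n\ge 0$, and let $u\in\mathbb{R}^n$ with $u_i>0$ for all $i$. Let $f(x)=\frac12\left(\sum_{i=1}^n x_i\right)^2-\sum_{i=1}^n c_ix_i$. For $k=0,\dots,n$ let $U_k=\sum_{i=1}^k u_i$ ($U_0=0$) and let $x^{(k)}$ be the vector with $x^{(k)}_i=u_i$ for $i\le k$ and $x^{(k)}_i=0$ for $i>k$. For $k=1,\dots,n$ let $G_k=U_{k-1}+\frac12 u_k-c_k$, and suppose $\bar n$ is the smallest index in $\{1,\dots,n\}$ with $G_{\bar n}\ge 0$. Let $e_i$ denote the $i$-th standard unit vector of $\mathbb{R}^n$. (i) If $\bar n>1$, let $\delta_1=\min\{c_{\bar n-1}-U_{\bar n-2},\,u_{\bar n-1}\}$, $\delta_2=\max\{c_{\bar n}-U_{\bar n-1},\,0\}$, $\bar x=x^{(\bar n-2)}+\delta_1e_{\bar n-1}$ and $\tilde x=x^{(\bar n-1)}+\delta_2e_{\bar n}$. Then $\min\{f(\bar x),f(\tilde x)\}$ is the optimal value of the problem of minimizing $f(x)$ subject to $x^{(\bar n-2)}\le x\le x^{(\bar n)}$ (componentwise). (ii) If $\bar n=1$, let $\delta=\min\{c_1,u_1\}$ and $\tilde x=\delta e_1$. Then $f(\tilde x)$ is the optimal value of the problem of minimizing $f(x)$ subject to $x^{(0)}\le x\le x^{(1)}$.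
   Context: Inequalities between vectors are componentwise. *)

theory Defs
  imports Complex_Main
begin

text \<open>Vectors of R^n are represented as functions nat => real, using the
components with indices 1..n.\<close>

definition fobj :: "nat \<Rightarrow> (nat \<Rightarrow> real) \<Rightarrow> (nat \<Rightarrow> real) \<Rightarrow> real" where
  "fobj n c x = (1/2) * (\<Sum>i=1..n. x i)^2 - (\<Sum>i=1..n. c i * x i)"

definition Usum :: "(nat \<Rightarrow> real) \<Rightarrow> nat \<Rightarrow> real" where
  "Usum u k = (\<Sum>i=1..k. u i)"

definition xk :: "(nat \<Rightarrow> real) \<Rightarrow> nat \<Rightarrow> nat \<Rightarrow> real" where
  "xk u k = (\<lambda>i. if 1 \<le> i \<and> i \<le> k then u i else 0)"

definition Gk :: "(nat \<Rightarrow> real) \<Rightarrow> (nat \<Rightarrow> real) \<Rightarrow> nat \<Rightarrow> real" where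
  "Gk u c k = Usum u (k - 1) + (1/2) * u k - c k"

definition unitv :: "nat \<Rightarrow> nat \<Rightarrow> real" where
  "unitv j = (\<lambda>i. if i = j then 1 else 0)"

definition box :: "nat \<Rightarrow> (nat \<Rightarrow> real) \<Rightarrow> (nat \<Rightarrow> real) \<Rightarrow> (nat \<Rightarrow> real) set" where
  "box n lo hi = {x. \<forall>i\<in>{1..n}. lo i \<le> x i \<and> x i \<le> hi i}"

end

theory Submission
  imports Defs
begin

lemma sum_trunc:
  assumes "m \<le> n" "\<And>i. m < i \<Longrightarrow> i \<le> n \<Longrightarrow> g i = 0"
  shows "sum g {1..n} = sum (g::nat\<Rightarrow>real) {1..m}"
  by (rule sum.mono_neutral_right) (use assms in auto)

lemma fobj_two:
  assumes "k + 2 \<le> n" "\<And>i. k + 2 < i \<Longrightarrow> i \<le> n \<Longrightarrow> x i = 0"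
  shows "fobj n c x = (1/2) * ((\<Sum>i=1..k. x i) + x (k+1) + x (k+2))^2
     - ((\<Sum>i=1..k. c i * x i) + c (k+1) * x (k+1) + c (k+2) * x (k+2))"
proof -
  have "(\<Sum>i=1..n. x i) = (\<Sum>i=1..k+2. x i)"
    by (rule sum_trunc) (use assms in auto)
  moreover have "(\<Sum>i=1..n. c i * x i) = (\<Sum>i=1..k+2. c i * x i)"
    by (rule sum_trunc) (use assms in auto)
  ultimately show ?thesis unfolding fobj_def
    by (simp add: numeral_2_eq_2 sum.cl_ivl_Suc add.assoc)
qed

lemma fobj_one:
  assumes "1 \<le> n" "\<And>i. 1 < i \<Longrightarrow> i \<le> n \<Longrightarrow> x i = 0"
  shows "fobj n c x = (1/2) * (x 1)^2 - c 1 * x 1"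
proof -
  have "(\<Sum>i=1..n. x i) = (\<Sum>i=1..1. x i)"
    by (rule sum_trunc) (use assms in auto)
  moreover have "(\<Sum>i=1..n. c i * x i) = (\<Sum>i=1..1. c i * x i)"
    by (rule sum_trunc) (use assms in auto)
  ultimately show ?thesis unfolding fobj_def by simp
qed

lemma one_dim:
  fixes S p t U :: real
  assumes "0 \<le> t" "t \<le> U" "d = min (p - S) U" "p - S \<ge> 0"
  shows "(1/2)*(S+d)^2 - p*d \<le> (1/2)*(S+t)^2 - p*t"
proof (cases "p - S \<le> U")
  case True
  then have p: "p = S + d" using assms by simp
  have "(1/2)*(S+t)^2 - p*t - ((1/2)*(S+d)^2 - p*d) = (1/2)*(t - d)^2"
    unfolding p by (simp add: power2_eq_square algebra_simps)
  moreover have "(1/2)*(t - d)^2 \<ge> (0::real)" by simp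
  ultimately show ?thesis by linarith
next
  case False
  then have "d = U" using assms by simp
  have "(1/2)*(S+t)^2 - p*t - ((1/2)*(S+d)^2 - p*d) = (U - t) * (p - S - (t+U)/2)"
    unfolding \<open>d = U\<close> by (simp add: power2_eq_square field_simps)
  moreover have "(U - t) * (p - S - (t+U)/2) \<ge> 0"
    using assms False by (intro mult_nonneg_nonneg) auto
  ultimately show ?thesis by linarith
qed

lemma one_dim2:
  fixes S q t U :: real
  assumes "0 \<le> t" "t \<le> U" "d = max (q - S) 0" "q - S \<le> U"
  shows "(1/2)*(S+d)^2 - q*d \<le> (1/2)*(S+t)^2 - q*t"
proof (cases "q - S \<ge> 0")
  case True
  then have q: "q = S + d" using assms by simp
  have "(1/2)*(S+t)^2 - q*t - ((1/2)*(S+d)^2 - q*d) = (1/2)*(t - d)^2"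
    unfolding q by (simp add: power2_eq_square algebra_simps)
  moreover have "(1/2)*(t - d)^2 \<ge> (0::real)" by simp
  ultimately show ?thesis by linarith
next
  case False
  then have "d = 0" using assms by simp
  have "(1/2)*(S+t)^2 - q*t - ((1/2)*(S+d)^2 - q*d) = t * (S - q + t/2)"
    unfolding \<open>d = 0\<close> by (simp add: power2_eq_square field_simps)
  moreover have "t * (S - q + t/2) \<ge> 0"
    using assms False by (intro mult_nonneg_nonneg) auto
  ultimately show ?thesis by linarith
qed

lemma two_dim:
  fixes S p q a b U1 U2 :: real
  assumes "q \<le> p" "0 \<le> a" "a \<le> U1" "0 \<le> b" "b \<le> U2"
    "p - S \<ge> 0" "q - S - U1 \<le> U2"
    "d1 = min (p - S) U1" "d2 = max (q - (S + U1)) 0"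
  shows "min ((1/2)*(S+d1+0)^2 - p*d1 - q*0) ((1/2)*(S+U1+d2)^2 - p*U1 - q*d2)
     \<le> (1/2)*(S+a+b)^2 - p*a - q*b"
proof (cases "a + b \<le> U1")
  case True
  have "(1/2)*(S+d1)^2 - p*d1 \<le> (1/2)*(S+(a+b))^2 - p*(a+b)"
    by (rule one_dim[of _ U1]) (use assms True in auto)
  then have h1: "(1/2)*(S+d1+0)^2 - p*d1 - q*0 \<le> (1/2)*(S+a+b)^2 - p*a - p*b"
    by (simp add: distrib_left add.assoc)
  have "q*b \<le> p*b" using assms by (intro mult_right_mono) auto
  then show ?thesis using h1 by linarith
next
  case False
  have "(1/2)*((S+U1)+d2)^2 - q*d2 \<le> (1/2)*((S+U1)+(a+b-U1))^2 - q*(a+b-U1)"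
    by (rule one_dim2[of _ U2]) (use assms False in auto)
  then have h1: "(1/2)*(S+U1+d2)^2 - q*d2 \<le> (1/2)*(S+a+b)^2 - q*a - q*b + q*U1"
    by (simp add: right_diff_distrib distrib_left add.assoc)
  have "q*(U1 - a) \<le> p*(U1 - a)" using assms by (intro mult_right_mono) auto
  then have "q*U1 - q*a \<le> p*U1 - p*a" by (simp add: right_diff_distrib)
  then show ?thesis using h1 by linarith
qed

theorem theorem2:
  fixes n nbar :: nat and c u :: "nat \<Rightarrow> real"
  assumes n: "n \<ge> 1"
    and c_mono: "\<And>i j. 1 \<le> i \<Longrightarrow> i \<le> j \<Longrightarrow> j \<le> n \<Longrightarrow> c j \<le> c i"
    and c_nonneg: "c n \<ge> 0"
    and u_pos: "\<And>i. 1 \<le> i \<Longrightarrow> i \<le> n \<Longrightarrow> u i > 0"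
    and nbar_range: "1 \<le> nbar" "nbar \<le> n"
    and G_nbar: "Gk u c nbar \<ge> 0"
    and nbar_least: "\<And>k. 1 \<le> k \<Longrightarrow> k < nbar \<Longrightarrow> Gk u c k < 0"
  shows "(nbar > 1 \<longrightarrow>
           (let \<delta>1 = min (c (nbar - 1) - Usum u (nbar - 2)) (u (nbar - 1));
                \<delta>2 = max (c nbar - Usum u (nbar - 1)) 0;
                xbar = (\<lambda>i. xk u (nbar - 2) i + \<delta>1 * unitv (nbar - 1) i);
                xtil = (\<lambda>i. xk u (nbar - 1) i + \<delta>2 * unitv nbar i)
            in min (fobj n c xbar) (fobj n c xtil)
               = (INF x \<in> box n (xk u (nbar - 2)) (xk u nbar). fobj n c x)))
       \<and> (nbar = 1 \<longrightarrow>
           (let \<delta> = min (c 1) (u 1);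
                xtil = (\<lambda>i. \<delta> * unitv 1 i)
            in fobj n c xtil = (INF x \<in> box n (xk u 0) (xk u 1). fobj n c x)))"
proof (intro conjI impI)
  assume "nbar > 1"
  define k where "k = nbar - 2"
  have k: "nbar = k + 2" using \<open>nbar > 1\<close> unfolding k_def by simp
  define S where "S = Usum u k"
  define C0 where "C0 = (\<Sum>i=1..k. c i * u i)"
  define d1 where "d1 = min (c (k+1) - S) (u (k+1))"
  define d2 where "d2 = max (c (k+2) - (S + u (k+1))) 0"
  have US: "Usum u (k+1) = S + u (k+1)" unfolding S_def Usum_def by simp
  have G1: "S + (1/2) * u (k+1) - c (k+1) < 0"
    using nbar_least[of "k+1"] k unfolding Gk_def S_def by simp
  have G2: "S + u (k+1) + (1/2) * u (k+2) - c (k+2) \<ge> 0"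
    using G_nbar k US unfolding Gk_def by simp
  have up1: "u (k+1) > 0" and up2: "u (k+2) > 0" using u_pos nbar_range k by auto
  have cm: "c (k+2) \<le> c (k+1)" using c_mono nbar_range k by auto
  have d1r: "0 \<le> d1" "d1 \<le> u (k+1)" using G1 up1 unfolding d1_def by auto
  have d2r: "0 \<le> d2" "d2 \<le> u (k+2)" using G2 up2 unfolding d2_def by auto
  have kn: "k + 2 \<le> n" using nbar_range k by simp
  have sumx: "(\<Sum>i=1..k. x i) = S" "(\<Sum>i=1..k. c i * x i) = C0"
    if "\<And>i. 1 \<le> i \<Longrightarrow> i \<le> k \<Longrightarrow> x i = u i" for x
    using that unfolding S_def C0_def Usum_def by (auto intro!: sum.cong)
  have F: "fobj n c x = (1/2) * (S + x (k+1) + x (k+2))^2 - C0 - c (k+1) * x (k+1) - c (k+2) * x (k+2)"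
    if "\<And>i. 1 \<le> i \<Longrightarrow> i \<le> k \<Longrightarrow> x i = u i" "\<And>i. k + 2 < i \<Longrightarrow> i \<le> n \<Longrightarrow> x i = 0" for x
    using fobj_two[of k n x c, OF kn that(2)] sumx[OF that(1)] by simp
  define xbar where "xbar = (\<lambda>i. xk u k i + d1 * unitv (k+1) i)"
  define xtil where "xtil = (\<lambda>i. xk u (k+1) i + d2 * unitv (k+2) i)"
  have Fbar: "fobj n c xbar = (1/2) * (S + d1 + 0)^2 - C0 - c (k+1) * d1 - c (k+2) * 0"
    using F[of xbar] unfolding xbar_def xk_def unitv_def by simp
  have Ftil: "fobj n c xtil = (1/2) * (S + u (k+1) + d2)^2 - C0 - c (k+1) * u (k+1) - c (k+2) * d2"
    using F[of xtil] unfolding xtil_def xk_def unitv_def by simp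
  have u0: "\<And>i. 1 \<le> i \<Longrightarrow> i \<le> n \<Longrightarrow> 0 \<le> u i" using u_pos less_imp_le by blast
  define B where "B = box n (xk u k) (xk u (k+2))"
  have bar_in: "xbar \<in> B" unfolding B_def box_def xbar_def xk_def unitv_def
    using d1r u0 by force
  have til_in: "xtil \<in> B" unfolding B_def box_def xtil_def xk_def unitv_def
    using d2r u0 by (auto simp: le_Suc_eq)
  have lower: "min (fobj n c xbar) (fobj n c xtil) \<le> fobj n c x" if xB: "x \<in> B" for x
  proof -
    have bx: "xk u k i \<le> x i \<and> x i \<le> xk u (k+2) i" if "1 \<le> i" "i \<le> n" for i
      using xB that unfolding B_def box_def by auto
    have b1: "\<And>i. 1 \<le> i \<Longrightarrow> i \<le> k \<Longrightarrow> x i = u i"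
    proof -
      fix i assume "1 \<le> i" "i \<le> k"
      then show "x i = u i" using bx[of i] kn unfolding xk_def by simp
    qed
    have b2: "\<And>i. k + 2 < i \<Longrightarrow> i \<le> n \<Longrightarrow> x i = 0"
    proof -
      fix i assume "k + 2 < i" "i \<le> n"
      then show "x i = 0" using bx[of i] unfolding xk_def by simp
    qed
    have ba: "0 \<le> x (k+1)" "x (k+1) \<le> u (k+1)" "0 \<le> x (k+2)" "x (k+2) \<le> u (k+2)"
      using bx[of "k+1"] bx[of "k+2"] kn unfolding xk_def by auto
    have "min ((1/2)*(S+d1+0)^2 - c (k+1)*d1 - c (k+2)*0) ((1/2)*(S+u (k+1)+d2)^2 - c (k+1)*u (k+1) - c (k+2)*d2)
     \<le> (1/2)*(S+x (k+1)+x (k+2))^2 - c (k+1)*x (k+1) - c (k+2)*x (k+2)"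
      by (rule two_dim[OF cm ba _ _ d1_def d2_def]) (use G1 G2 up1 up2 in auto)
    then show ?thesis using F[OF b1 b2] Fbar Ftil by linarith
  qed
  have "(INF x \<in> B. fobj n c x) = min (fobj n c xbar) (fobj n c xtil)"
  proof (rule cInf_eq_minimum)
    show "min (fobj n c xbar) (fobj n c xtil) \<in> fobj n c ` B"
      using bar_in til_in by (simp add: min_def)
  next
    fix y assume "y \<in> fobj n c ` B" then show "min (fobj n c xbar) (fobj n c xtil) \<le> y"
      using lower by auto
  qed
  show "let \<delta>1 = min (c (nbar - 1) - Usum u (nbar - 2)) (u (nbar - 1));
                \<delta>2 = max (c nbar - Usum u (nbar - 1)) 0;
                xbar = (\<lambda>i. xk u (nbar - 2) i + \<delta>1 * unitv (nbar - 1) i);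
                xtil = (\<lambda>i. xk u (nbar - 1) i + \<delta>2 * unitv nbar i)
            in min (fobj n c xbar) (fobj n c xtil)
               = (INF x \<in> box n (xk u (nbar - 2)) (xk u nbar). fobj n c x)"
  proof -
    have eq1: "min (c (nbar - 1) - Usum u (nbar - 2)) (u (nbar - 1)) = d1"
      unfolding d1_def S_def k by simp
    have eq2: "max (c nbar - Usum u (nbar - 1)) 0 = d2"
      unfolding d2_def US[symmetric] k by simp
    have eq3: "(\<lambda>i. xk u (nbar - 2) i + d1 * unitv (nbar - 1) i) = xbar"
      unfolding xbar_def k by simp
    have eq4: "(\<lambda>i. xk u (nbar - 1) i + d2 * unitv nbar i) = xtil"
      unfolding xtil_def k by simp
    have eq5: "box n (xk u (nbar - 2)) (xk u nbar) = B"
      unfolding B_def k by simp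
    show ?thesis unfolding Let_def eq1 eq2 eq3 eq4 eq5 using \<open>(INF x \<in> B. fobj n c x) = _\<close> by simp
  qed
next
  assume m1: "nbar = 1"
  define d where "d = min (c 1) (u 1)"
  have c1: "c 1 \<ge> 0" using c_mono[of 1 n] n c_nonneg by simp
  have u1: "u 1 > 0" using u_pos n by simp
  define xt where "xt = (\<lambda>i. d * unitv 1 i)"
  define B where "B = box n (xk u 0) (xk u 1)"
  have dr: "0 \<le> d" "d \<le> u 1" using c1 u1 unfolding d_def by auto
  have in_B: "xt \<in> B" unfolding B_def box_def xt_def xk_def unitv_def using dr by auto
  have Ft: "fobj n c xt = (1/2) * d^2 - c 1 * d"
    using fobj_one[OF n, of xt c] unfolding xt_def unitv_def by simp
  have lower: "fobj n c xt \<le> fobj n c x" if "x \<in> B" for x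
  proof -
    have b2: "\<And>i. 1 < i \<Longrightarrow> i \<le> n \<Longrightarrow> x i = 0"
    proof -
      fix i assume i: "1 < i" "i \<le> n"
      then have "i \<in> {1..n}" by simp
      then have "xk u 0 i \<le> x i \<and> x i \<le> xk u 1 i" using that unfolding B_def box_def by blast
      then show "x i = 0" using i unfolding xk_def by simp
    qed
    have "1 \<in> {1..n}" using n by simp
    then have "xk u 0 1 \<le> x 1 \<and> x 1 \<le> xk u 1 1" using that unfolding B_def box_def by blast
    then have ba: "0 \<le> x 1" "x 1 \<le> u 1" unfolding xk_def by auto
    have "(1/2)*(0+d)^2 - c 1*d \<le> (1/2)*(0+x 1)^2 - c 1 * x 1"
    proof (rule one_dim[OF ba])
      show "d = min (c 1 - 0) (u 1)" using d_def by simp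
      show "0 \<le> c 1 - 0" using c1 by simp
    qed
    then show ?thesis using Ft fobj_one[OF n b2] by simp
  qed
  have "(INF x \<in> B. fobj n c x) = fobj n c xt"
    by (rule cInf_eq_minimum) (use in_B lower in auto)
  then show "let \<delta> = min (c 1) (u 1);
                xtil = (\<lambda>i. \<delta> * unitv 1 i)
            in fobj n c xtil = (INF x \<in> box n (xk u 0) (xk u 1). fobj n c x)"
    unfolding Let_def B_def xt_def d_def by simp
qed

end
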